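(* Let Assumptions 1 and 2 hold and $\eta>0$. Let $u_1,\dots,u_T\in\mathbb{R}^N$ be arbitrary payoff vectors and $\beta_1,\dots,\beta_T\in\mathbb{R}^N$ any predictions with $\beta_t$ allowed to depend on $u_1,\dots,u_{t-1}$. Let the OFTRL choices be $x_t=\arg\max_{x\in\Delta_N}\{\langle\theta_{t-1}+\beta_t,x\rangle-\mathcal R(x)\}=\nabla\varphi_\eta(\theta_{t-1}+\beta_t)$, $t=1,\dots,T$. Then for every $x^*\in\Delta_N$, $$\sum_{t=1}^T\langle x^*-x_t,u_t\rangle\le\eta\,\varphi_1(0)+\frac{L}{2\eta}\sum_{t=1}^T\|u_t-\beta_t\|_\infty^2 .$$
   Context: Let $N\ge 2$, $A=\{1,\dots,N\}$, and $\Delta_N=\{x\in\mathbb{R}^N: x_i\ge 0,\ \sum_i x_i=1\}$. Let $\epsilon=(\epsilon_1,\dots,\epsilon_N)$ be a random vector satisfying Assumption 1: each $\epsilon_i$ is integrable with $\mathbb{E}[\epsilon_i]=0$, and the law of $\epsilon$ is absolutely continuous with respect to Lebesgue measure on $\mathbb{R}^N$ with support all of $\mathbb{R}^N$. For $\eta>0$ the social surplus function is $\varphi_\eta(\theta)=\mathbb{E}[\max_{j\in A}(\theta_j+\eta\epsilon_j)]$, $\theta\in\mathbb{R}^N$; thus $\varphi_\eta(\theta)=\eta\varphi_1(\theta/\eta)$, and $\varphi_1(0)=\mathbb{E}[\max_i\epsilon_i]$. $\varphi_\eta$ is convex and differentiable with $\nabla\varphi_\eta(\theta)\in\Delta_N$.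 Assumption 2: $\varphi_1$ is twice continuously differentiable and there is a constant $L>0$ with $2\,\mathrm{tr}(\nabla^2\varphi_1(\theta))\le L$ for all $\theta\in\mathbb{R}^N$. Set $\theta_0=0$, $\theta_t=\sum_{s=1}^tu_s$. Regularizer: $\mathcal R(x)=\sup_{\theta\in\mathbb{R}^N}\{\langle\theta,x\rangle-\varphi_\eta(\theta)\}$ for $x\in\Delta_N$. *)

theory Defs
  imports "HOL-Analysis.Analysis" "HOL-Probability.Probability"
begin

definition surplus :: "'a measure \<Rightarrow> ('a \<Rightarrow> real^'n) \<Rightarrow> real \<Rightarrow> real^'n \<Rightarrow> real" where
  "surplus M eps \<eta> \<theta> = (\<integral>\<omega>. (MAX j. \<theta> $ j + \<eta> * (eps \<omega> $ j)) \<partial>M)"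

definition noise_assumption :: "'a measure \<Rightarrow> ('a \<Rightarrow> real^'n) \<Rightarrow> bool" where
  "noise_assumption M eps \<longleftrightarrow>
     prob_space M \<and> eps \<in> borel_measurable M \<and>
     (\<forall>i. integrable M (\<lambda>\<omega>. eps \<omega> $ i) \<and> (\<integral>\<omega>. eps \<omega> $ i \<partial>M) = 0) \<and>
     absolutely_continuous lborel (distr M borel eps) \<and>
     (\<forall>U. open U \<and> U \<noteq> {} \<longrightarrow> measure M (eps -` U \<inter> space M) > 0)"

definition C2_with :: "(real^'n \<Rightarrow> real) \<Rightarrow> (real^'n \<Rightarrow> real^'n) \<Rightarrow> (real^'n \<Rightarrow> real^'n^'n) \<Rightarrow> bool" where
  "C2_with f g H \<longleftrightarrow>
     (\<forall>\<theta>. (f has_derivative (\<lambda>h. g \<theta> \<bullet> h)) (at \<theta>)) \<and>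
     (\<forall>\<theta>. (g has_derivative (\<lambda>h. H \<theta> *v h)) (at \<theta>)) \<and>
     continuous_on UNIV H"

definition hessian_trace_bound :: "'a measure \<Rightarrow> ('a \<Rightarrow> real^'n) \<Rightarrow> real \<Rightarrow> bool" where
  "hessian_trace_bound M eps L \<longleftrightarrow> L > 0 \<and>
     (\<exists>g H. C2_with (surplus M eps 1) g H \<and> (\<forall>\<theta>. 2 * trace (H \<theta>) \<le> L))"

definition prob_simplex :: "(real^'n) set" where
  "prob_simplex = {x. (\<forall>i. x $ i \<ge> 0) \<and> sum (\<lambda>i. x $ i) UNIV = 1}"

end

theory Submission
  imports Defs
begin

definition mx :: "real^'n \<Rightarrow> real" where "mx a = (MAX j. a $ j)"

lemma mx_ge: "a $ j \<le> mx a"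
  unfolding mx_def by (rule Max_ge) auto

lemma mx_att: "\<exists>j. mx a = a $ j"
proof -
  have "mx a \<in> range (\<lambda>j. a $ j)" unfolding mx_def by (rule Max_in) auto
  then show ?thesis by auto
qed

lemma mx_le: "(\<And>j. a $ j \<le> c) \<Longrightarrow> mx a \<le> c"
  using mx_att by metis

lemma mx_scale: "c \<ge> 0 \<Longrightarrow> mx (c *\<^sub>R a) = c * mx a"
proof (rule antisym)
  assume c: "c \<ge> 0"
  show "mx (c *\<^sub>R a) \<le> c * mx a" using c by (intro mx_le) (simp add: mult_left_mono mx_ge)
  obtain j where "mx a = a $ j" using mx_att by blast
  then show "c * mx a \<le> mx (c *\<^sub>R a)" using mx_ge[of "c *\<^sub>R a" j] by simp
qed

lemma mx_shift: "mx (a + (\<chi> k. c)) = mx a + c"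
proof (rule antisym)
  show "mx (a + (\<chi> k. c)) \<le> mx a + c" by (intro mx_le) (simp add: mx_ge)
  obtain j where "mx a = a $ j" using mx_att by blast
  then show "mx a + c \<le> mx (a + (\<chi> k. c))" using mx_ge[of "a + (\<chi> k. c)" j] by simp
qed

lemma mx_conv: "0 \<le> s \<Longrightarrow> s \<le> 1 \<Longrightarrow> mx ((1 - s) *\<^sub>R a + s *\<^sub>R b) \<le> (1 - s) * mx a + s * mx b"
  apply (intro mx_le)
  apply simp
  apply (intro add_mono mult_left_mono mx_ge)
  apply auto
  done

lemma mx_simplex: assumes "x \<in> prob_simplex" shows "x \<bullet> a \<le> mx a"
proof -
  have "x \<bullet> a = (\<Sum>i\<in>UNIV. x $ i * a $ i)" by (simp add: inner_vec_def)
  also have "\<dots> \<le> (\<Sum>i\<in>UNIV. x $ i * mx a)"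
    using assms by (intro sum_mono mult_left_mono mx_ge) (auto simp: prob_simplex_def)
  also have "\<dots> = mx a" using assms by (simp add: prob_simplex_def sum_distrib_right[symmetric])
  finally show ?thesis .
qed

lemma mx_submod:
  assumes "i \<noteq> j" "s \<ge> 0" "t \<ge> 0"
  shows "mx (a + s *\<^sub>R axis i 1 + t *\<^sub>R axis j 1) + mx a \<le> mx (a + s *\<^sub>R axis i 1) + mx (a + t *\<^sub>R axis j 1)"
proof -
  obtain k where k: "mx (a + s *\<^sub>R axis i 1 + t *\<^sub>R axis j 1) = (a + s *\<^sub>R axis i 1 + t *\<^sub>R axis j 1) $ k"
    using mx_att by blast
  have a1: "mx a \<le> mx (a + s *\<^sub>R axis i 1)"
  proof (intro mx_le)
    fix k show "a $ k \<le> mx (a + s *\<^sub>R axis i 1)"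
      using mx_ge[of "a + s *\<^sub>R axis i 1" k] assms by (cases "k = i") (auto simp: axis_def)
  qed
  have a2: "mx a \<le> mx (a + t *\<^sub>R axis j 1)"
  proof (intro mx_le)
    fix k show "a $ k \<le> mx (a + t *\<^sub>R axis j 1)"
      using mx_ge[of "a + t *\<^sub>R axis j 1" k] assms by (cases "k = j") (auto simp: axis_def)
  qed
  show ?thesis
  proof (cases "k = i")
    case True
    then have "mx (a + s *\<^sub>R axis i 1 + t *\<^sub>R axis j 1) = (a + s *\<^sub>R axis i 1) $ k"
      using k assms by (simp add: axis_def)
    then show ?thesis using mx_ge[of "a + s *\<^sub>R axis i 1" k] a2 by linarith
  next
    case False
    then have "mx (a + s *\<^sub>R axis i 1 + t *\<^sub>R axis j 1) = (a + t *\<^sub>R axis j 1) $ k"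
      using k assms by (simp add: axis_def)
    then show ?thesis using mx_ge[of "a + t *\<^sub>R axis j 1" k] a1 by linarith
  qed
qed

lemma surplus_mx: "surplus M eps \<eta> \<theta> = (\<integral>\<omega>. mx (\<theta> + \<eta> *\<^sub>R eps \<omega>) \<partial>M)"
  unfolding surplus_def mx_def by simp

lemma integ:
  assumes "noise_assumption M eps"
  shows "integrable M (\<lambda>\<omega>. mx (\<theta> + \<eta> *\<^sub>R eps \<omega>))"
proof -
  interpret prob_space M using assms by (simp add: noise_assumption_def)
  have "integrable M (\<lambda>\<omega>. MAX j\<in>UNIV. \<theta> $ j + \<eta> * (eps \<omega> $ j))"
    using assms by (intro integrable_MAX) (auto simp: noise_assumption_def)
  then show ?thesis by (simp add: mx_def)
qed

lemma integ1:
  assumes "noise_assumption M eps"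
  shows "integrable M (\<lambda>\<omega>. mx (\<theta> + eps \<omega>))"
  using integ[OF assms, of \<theta> 1] by simp


lemma surplus_scale:
  assumes "\<eta> > 0"
  shows "surplus M eps \<eta> \<theta> = \<eta> * surplus M eps 1 ((1/\<eta>) *\<^sub>R \<theta>)"
proof -
  have "\<And>\<omega>. mx (\<theta> + \<eta> *\<^sub>R eps \<omega>) = \<eta> * mx ((1/\<eta>) *\<^sub>R \<theta> + 1 *\<^sub>R eps \<omega>)"
  proof -
    fix \<omega>
    have "\<theta> + \<eta> *\<^sub>R eps \<omega> = \<eta> *\<^sub>R ((1/\<eta>) *\<^sub>R \<theta> + 1 *\<^sub>R eps \<omega>)"
      using assms by (simp add: algebra_simps)
    then show "mx (\<theta> + \<eta> *\<^sub>R eps \<omega>) = \<eta> * mx ((1/\<eta>) *\<^sub>R \<theta> + 1 *\<^sub>R eps \<omega>)"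
      using assms mx_scale[of \<eta>] by simp
  qed
  then show ?thesis unfolding surplus_mx by simp
qed

lemma surplus_shift:
  assumes "noise_assumption M eps"
  shows "surplus M eps 1 (\<theta> + (\<chi> k. c)) = surplus M eps 1 \<theta> + c"
proof -
  interpret prob_space M using assms by (simp add: noise_assumption_def)
  have "\<And>\<omega>. mx (\<theta> + (\<chi> k. c) + 1 *\<^sub>R eps \<omega>) = mx (\<theta> + 1 *\<^sub>R eps \<omega>) + c"
    using mx_shift[of "\<theta> + 1 *\<^sub>R eps _" c] by (simp add: algebra_simps)
  then have "surplus M eps 1 (\<theta> + (\<chi> k. c)) = (\<integral>\<omega>. mx (\<theta> + 1 *\<^sub>R eps \<omega>) + c \<partial>M)"
    unfolding surplus_mx by simp
  also have "\<dots> = surplus M eps 1 \<theta> + c"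
    unfolding surplus_mx using integ[OF assms, of \<theta> 1] by (simp add: prob_space)
  finally show ?thesis .
qed

lemma surplus_submod:
  assumes "noise_assumption M eps" "i \<noteq> j" "s \<ge> 0" "t \<ge> 0"
  shows "surplus M eps 1 (w + s *\<^sub>R axis i 1 + t *\<^sub>R axis j 1) + surplus M eps 1 w
     \<le> surplus M eps 1 (w + s *\<^sub>R axis i 1) + surplus M eps 1 (w + t *\<^sub>R axis j 1)"
proof -
  have eq: "\<And>v \<omega>. v + s *\<^sub>R axis i 1 + t *\<^sub>R axis j 1 = v + s *\<^sub>R axis i 1 + t *\<^sub>R axis j 1" by simp
  let ?a = "\<lambda>\<omega>. w + 1 *\<^sub>R eps \<omega>"
  have pt: "\<And>\<omega>. mx (w + s *\<^sub>R axis i 1 + t *\<^sub>R axis j 1 + 1 *\<^sub>R eps \<omega>) + mx (w + 1 *\<^sub>R eps \<omega>)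
     \<le> mx (w + s *\<^sub>R axis i 1 + 1 *\<^sub>R eps \<omega>) + mx (w + t *\<^sub>R axis j 1 + 1 *\<^sub>R eps \<omega>)"
  proof -
    fix \<omega>
    have "w + s *\<^sub>R axis i 1 + t *\<^sub>R axis j 1 + 1 *\<^sub>R eps \<omega> = ?a \<omega> + s *\<^sub>R axis i 1 + t *\<^sub>R axis j 1"
      "w + s *\<^sub>R axis i 1 + 1 *\<^sub>R eps \<omega> = ?a \<omega> + s *\<^sub>R axis i 1"
      "w + t *\<^sub>R axis j 1 + 1 *\<^sub>R eps \<omega> = ?a \<omega> + t *\<^sub>R axis j 1"
      by (simp_all add: algebra_simps)
    then show "?thesis \<omega>" using mx_submod[OF assms(2-4), of "?a \<omega>"] by (simp add: add_ac)
  qed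
  show ?thesis unfolding surplus_mx
    apply (subst Bochner_Integration.integral_add[symmetric], (rule integ[OF assms(1)])+)+
    apply (rule integral_mono)
    using pt by (auto intro!: Bochner_Integration.integrable_add integ[OF assms(1)] integ1[OF assms(1)])
qed

lemma surplus_conv:
  assumes "noise_assumption M eps" "0 \<le> s" "s \<le> 1"
  shows "surplus M eps \<eta> (y + s *\<^sub>R d) \<le> (1 - s) * surplus M eps \<eta> y + s * surplus M eps \<eta> (y + d)"
proof -
  have pt: "\<And>\<omega>. mx (y + s *\<^sub>R d + \<eta> *\<^sub>R eps \<omega>) \<le> (1 - s) * mx (y + \<eta> *\<^sub>R eps \<omega>) + s * mx (y + d + \<eta> *\<^sub>R eps \<omega>)"
  proof -
    fix \<omega>
    have "y + s *\<^sub>R d + \<eta> *\<^sub>R eps \<omega> = (1 - s) *\<^sub>R (y + \<eta> *\<^sub>R eps \<omega>) + s *\<^sub>R (y + d + \<eta> *\<^sub>R eps \<omega>)"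
      by (simp add: algebra_simps)
    then show "?thesis \<omega>" using mx_conv[OF assms(2,3)] by metis
  qed
  have "surplus M eps \<eta> (y + s *\<^sub>R d) \<le> (\<integral>\<omega>. (1 - s) * mx (y + \<eta> *\<^sub>R eps \<omega>) + s * mx (y + d + \<eta> *\<^sub>R eps \<omega>) \<partial>M)"
    unfolding surplus_mx
    by (rule integral_mono) (auto intro!: integrable_add integrable_mult_right integ[OF assms(1)] pt)
  also have "\<dots> = (1 - s) * surplus M eps \<eta> y + s * surplus M eps \<eta> (y + d)"
    unfolding surplus_mx
    using integ[OF assms(1)] by simp
  finally show ?thesis .
qed

lemma surplus_lower:
  assumes "noise_assumption M eps" "x \<in> prob_simplex"
  shows "x \<bullet> \<theta> \<le> surplus M eps \<eta> \<theta>"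
proof -
  interpret prob_space M using assms by (simp add: noise_assumption_def)
  have ie: "\<And>i. integrable M (\<lambda>\<omega>. eps \<omega> $ i)" "\<And>i. (\<integral>\<omega>. eps \<omega> $ i \<partial>M) = 0"
    using assms(1) by (auto simp: noise_assumption_def)
  have "\<And>\<omega>. x \<bullet> (\<theta> + \<eta> *\<^sub>R eps \<omega>) = x \<bullet> \<theta> + \<eta> * (\<Sum>i\<in>UNIV. x $ i * eps \<omega> $ i)"
    by (simp add: inner_add_right inner_vec_def algebra_simps sum.distrib sum_distrib_left)
  then have "(\<integral>\<omega>. x \<bullet> (\<theta> + \<eta> *\<^sub>R eps \<omega>) \<partial>M) = (\<integral>\<omega>. x \<bullet> \<theta> + \<eta> * (\<Sum>i\<in>UNIV. x $ i * eps \<omega> $ i) \<partial>M)"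
    by simp
  also have "\<dots> = x \<bullet> \<theta> + \<eta> * (\<Sum>i\<in>UNIV. x $ i * (\<integral>\<omega>. eps \<omega> $ i \<partial>M))"
    using ie by (subst Bochner_Integration.integral_add) (auto simp: prob_space integral_sum)
  also have "\<dots> = x \<bullet> \<theta>" using ie by simp
  finally have e: "(\<integral>\<omega>. x \<bullet> (\<theta> + \<eta> *\<^sub>R eps \<omega>) \<partial>M) = x \<bullet> \<theta>" .
  have "(\<integral>\<omega>. x \<bullet> (\<theta> + \<eta> *\<^sub>R eps \<omega>) \<partial>M) \<le> surplus M eps \<eta> \<theta>"
    unfolding surplus_mx
    apply (rule integral_mono)
    apply (simp add: inner_add_right inner_vec_def)
    using ie apply (auto intro!: integrable_add integrable_sum integrable_mult_right)[1]
    apply (rule integ[OF assms(1)])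
    apply (rule mx_simplex[OF assms(2)])
    done
  then show ?thesis using e by simp
qed


lemma line_deriv:
  fixes f :: "real^'n \<Rightarrow> real"
  assumes "(f has_derivative (\<lambda>h. G \<bullet> h)) (at (a + s *\<^sub>R v))"
  shows "((\<lambda>s. f (a + s *\<^sub>R v)) has_real_derivative (G \<bullet> v)) (at s)"
proof -
  have "((\<lambda>s. a + s *\<^sub>R v) has_derivative (\<lambda>h. h *\<^sub>R v)) (at s)"
    by (auto intro!: derivative_eq_intros)
  from diff_chain_at[OF this assms]
  have "((f \<circ> (\<lambda>s. a + s *\<^sub>R v)) has_derivative ((\<lambda>h. G \<bullet> h) \<circ> (\<lambda>h. h *\<^sub>R v))) (at s)" .
  then have "((\<lambda>s. f (a + s *\<^sub>R v)) has_derivative (\<lambda>h. G \<bullet> (h *\<^sub>R v))) (at s)"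
    unfolding o_def .
  then show ?thesis unfolding has_field_derivative_def
    by (rule has_derivative_eq_rhs) (auto simp: fun_eq_iff)
qed

lemma line_deriv2:
  fixes g :: "real^'n \<Rightarrow> real^'n"
  assumes "(g has_derivative (\<lambda>h. H *v h)) (at (a + s *\<^sub>R v))"
  shows "((\<lambda>s. g (a + s *\<^sub>R v) \<bullet> e) has_real_derivative ((H *v v) \<bullet> e)) (at s)"
proof -
  have "((\<lambda>s. a + s *\<^sub>R v) has_derivative (\<lambda>h. h *\<^sub>R v)) (at s)"
    by (auto intro!: derivative_eq_intros)
  from diff_chain_at[OF this assms]
  have "((g \<circ> (\<lambda>s. a + s *\<^sub>R v)) has_derivative ((\<lambda>h. H *v h) \<circ> (\<lambda>h. h *\<^sub>R v))) (at s)" .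
  then have "((\<lambda>s. (g \<circ> (\<lambda>s. a + s *\<^sub>R v)) s \<bullet> e) has_derivative (\<lambda>h. ((\<lambda>h. H *v h) \<circ> (\<lambda>h. h *\<^sub>R v)) h \<bullet> e)) (at s)"
    by (rule has_derivative_inner_left)
  then have "((\<lambda>s. g (a + s *\<^sub>R v) \<bullet> e) has_derivative (\<lambda>h. (H *v (h *\<^sub>R v)) \<bullet> e)) (at s)"
    unfolding o_def .
  then show ?thesis unfolding has_field_derivative_def
    by (rule has_derivative_eq_rhs) (auto simp: fun_eq_iff matrix_vector_mult_scaleR)
qed

lemma right_deriv_nonneg:
  fixes k :: "real \<Rightarrow> real"
  assumes "(k has_real_derivative D) (at 0)" "\<delta> > 0" "\<And>s. 0 < s \<Longrightarrow> s < \<delta> \<Longrightarrow> k 0 \<le> k s"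
  shows "D \<ge> 0"
proof (rule ccontr)
  assume "\<not> D \<ge> 0"
  then have "D < 0" by simp
  from DERIV_neg_dec_right[OF assms(1) this] obtain d where d: "d > 0" "\<And>h. h > 0 \<Longrightarrow> h < d \<Longrightarrow> k 0 > k (0 + h)"
    by blast
  let ?h = "min d \<delta> / 2"
  have "k 0 > k ?h" using d(2)[of ?h] d(1) assms(2) by simp
  moreover have "k 0 \<le> k ?h" using assms(3)[of ?h] d(1) assms(2) by simp
  ultimately show False by simp
qed


context
  fixes M :: "'a measure" and eps :: "'a \<Rightarrow> real^'n" and g :: "real^'n \<Rightarrow> real^'n"
    and H :: "real^'n \<Rightarrow> real^'n^'n"
  assumes na: "noise_assumption M eps" and c2: "C2_with (surplus M eps 1) g H"
begin

lemma fder: "(surplus M eps 1 has_derivative (\<lambda>h. g \<theta> \<bullet> h)) (at \<theta>)"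
  using c2 by (simp add: C2_with_def)

lemma gder: "(g has_derivative (\<lambda>h. H \<theta> *v h)) (at \<theta>)"
  using c2 by (simp add: C2_with_def)

lemma g_shift: "g (\<theta> + (\<chi> k. c)) = g \<theta>"
proof -
  let ?f = "surplus M eps 1" and ?c = "(\<chi> k. c) :: real^'n"
  have fe: "(\<lambda>x. ?f (x - ?c) + c) = ?f"
  proof
    fix x show "?f (x - ?c) + c = ?f x" using surplus_shift[OF na, of "x - ?c" c] by simp
  qed
  have "((\<lambda>x. x - ?c) has_derivative (\<lambda>h. h)) (at (\<theta> + ?c))"
    by (auto intro!: derivative_eq_intros)
  moreover have "(?f has_derivative (\<lambda>h. g \<theta> \<bullet> h)) (at ((\<lambda>x. x - ?c) (\<theta> + ?c)))"
    using fder by simp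
  ultimately have "((?f \<circ> (\<lambda>x. x - ?c)) has_derivative ((\<lambda>h. g \<theta> \<bullet> h) \<circ> (\<lambda>h. h))) (at (\<theta> + ?c))"
    by (rule diff_chain_at)
  then have "((\<lambda>x. ?f (x - ?c) + c) has_derivative (\<lambda>h. g \<theta> \<bullet> h)) (at (\<theta> + ?c))"
    unfolding o_def by (rule has_derivative_add_const)
  then have "(?f has_derivative (\<lambda>h. g \<theta> \<bullet> h)) (at (\<theta> + ?c))" unfolding fe .
  from has_derivative_unique[OF fder this]
  have "(\<lambda>h. g (\<theta> + ?c) \<bullet> h) = (\<lambda>h. g \<theta> \<bullet> h)" .
  then have "(g (\<theta> + ?c) - g \<theta>) \<bullet> (g (\<theta> + ?c) - g \<theta>) = 0"
    by (metis inner_diff_left right_minus_eq)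
  then show ?thesis by simp
qed

lemma H_rowsum: "H \<theta> *v (\<chi> k. 1) = 0"
proof -
  have "(H \<theta> *v (\<chi> k. 1)) $ i = 0" for i
  proof -
    have d: "((\<lambda>s. g (\<theta> + s *\<^sub>R (\<chi> k. 1)) \<bullet> axis i 1) has_real_derivative ((H \<theta> *v (\<chi> k. 1)) \<bullet> axis i 1)) (at 0)"
      by (rule line_deriv2) (simp add: gder)
    have "(\<lambda>s. g (\<theta> + s *\<^sub>R (\<chi> k. 1)) \<bullet> axis i 1) = (\<lambda>s. g \<theta> \<bullet> axis i 1)"
    proof
      fix s
      have "s *\<^sub>R (\<chi> k. 1) = ((\<chi> k. s) :: real^'n)" by (simp add: vec_eq_iff)
      then show "g (\<theta> + s *\<^sub>R (\<chi> k. 1)) \<bullet> axis i 1 = g \<theta> \<bullet> axis i 1" by (simp add: g_shift)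
    qed
    with d have "((\<lambda>s. g \<theta> \<bullet> axis i 1) has_real_derivative ((H \<theta> *v (\<chi> k. 1)) \<bullet> axis i 1)) (at 0)" by simp
    from DERIV_unique[OF this DERIV_const] show ?thesis by (simp add: cart_eq_inner_axis)
  qed
  then show ?thesis by (simp add: vec_eq_iff)
qed

lemma g_mono:
  assumes "i \<noteq> j" "t \<ge> 0"
  shows "g (\<theta> + t *\<^sub>R axis j 1) \<bullet> axis i 1 \<le> g \<theta> \<bullet> axis i 1"
proof -
  let ?f = "surplus M eps 1"
  let ?k = "\<lambda>s. (?f (\<theta> + s *\<^sub>R axis i 1) - ?f \<theta>) - (?f (\<theta> + t *\<^sub>R axis j 1 + s *\<^sub>R axis i 1) - ?f (\<theta> + t *\<^sub>R axis j 1))"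
  have d1: "((\<lambda>s. ?f (\<theta> + s *\<^sub>R axis i 1)) has_real_derivative (g \<theta> \<bullet> axis i 1)) (at 0)"
    by (rule line_deriv) (simp add: fder)
  have d2: "((\<lambda>s. ?f (\<theta> + t *\<^sub>R axis j 1 + s *\<^sub>R axis i 1)) has_real_derivative (g (\<theta> + t *\<^sub>R axis j 1) \<bullet> axis i 1)) (at 0)"
    by (rule line_deriv) (simp add: fder)
  have "(?k has_real_derivative ((g \<theta> \<bullet> axis i 1 - 0) - (g (\<theta> + t *\<^sub>R axis j 1) \<bullet> axis i 1 - 0))) (at 0)"
    by (intro DERIV_diff d1 d2 DERIV_const)
  moreover have "?k 0 \<le> ?k s" if "0 < s" for s
  proof -
    have ineq: "?f (\<theta> + s *\<^sub>R axis i 1 + t *\<^sub>R axis j 1) + ?f \<theta> \<le> ?f (\<theta> + s *\<^sub>R axis i 1) + ?f (\<theta> + t *\<^sub>R axis j 1)"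
      using surplus_submod[OF na assms(1), of s t \<theta>] that assms by simp
    have eq: "\<theta> + t *\<^sub>R axis j 1 + s *\<^sub>R axis i 1 = \<theta> + s *\<^sub>R axis i 1 + t *\<^sub>R axis j 1"
      by (simp add: algebra_simps)
    show ?thesis unfolding eq using ineq by simp
  qed
  ultimately have "(g \<theta> \<bullet> axis i 1 - 0) - (g (\<theta> + t *\<^sub>R axis j 1) \<bullet> axis i 1 - 0) \<ge> 0"
    by (intro right_deriv_nonneg[where \<delta>=1]) auto
  then show ?thesis by simp
qed

lemma H_offdiag:
  assumes "i \<noteq> j"
  shows "H \<theta> $ i $ j \<le> 0"
proof -
  let ?m = "\<lambda>t. g \<theta> \<bullet> axis i 1 - g (\<theta> + t *\<^sub>R axis j 1) \<bullet> axis i 1"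
  have d: "((\<lambda>t. g (\<theta> + t *\<^sub>R axis j 1) \<bullet> axis i 1) has_real_derivative ((H \<theta> *v axis j 1) \<bullet> axis i 1)) (at 0)"
    by (rule line_deriv2) (simp add: gder)
  have "(?m has_real_derivative (0 - (H \<theta> *v axis j 1) \<bullet> axis i 1)) (at 0)"
    by (intro DERIV_diff d DERIV_const)
  moreover have "?m 0 \<le> ?m t" if "0 < t" for t
    using g_mono[OF assms, of t \<theta>] that by simp
  ultimately have "0 - (H \<theta> *v axis j 1) \<bullet> axis i 1 \<ge> 0"
    by (intro right_deriv_nonneg[where \<delta>=1]) auto
  then show ?thesis
    by (simp add: matrix_vector_mult_basis column_def cart_eq_inner_axis[symmetric])
qed

end

lemma comp_le_infnorm: "\<bar>e $ i\<bar> \<le> infnorm (e :: real^'n)"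
  using Basis_le_infnorm[of "axis i 1" e] by (simp add: cart_eq_inner_axis)

lemma quad_bound:
  fixes A :: "real^'n^'n"
  assumes rs: "A *v (\<chi> k. 1) = 0" and off: "\<And>i j. i \<noteq> j \<Longrightarrow> A$i$j \<le> 0"
  shows "e \<bullet> (A *v e) \<le> 2 * trace A * (infnorm e)^2"
proof -
  define m where "m = infnorm e"
  have em: "\<bar>e$i\<bar> \<le> m" for i unfolding m_def by (rule comp_le_infnorm)
  have rs': "(\<Sum>j\<in>UNIV. A$i$j) = 0" for i
    using arg_cong[OF rs, of "\<lambda>v. v $ i"] by (simp add: matrix_vector_mult_def)
  have "e \<bullet> (A *v e) = (\<Sum>i\<in>UNIV. e$i * (\<Sum>j\<in>UNIV. A$i$j * e$j))"
    by (simp add: inner_vec_def matrix_vector_mult_def)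
  also have "\<dots> = (\<Sum>i\<in>UNIV. \<Sum>j\<in>UNIV. A$i$j * (e$i * (e$j - e$i)))"
  proof (rule sum.cong[OF refl])
    fix i
    have "(\<Sum>j\<in>UNIV. A$i$j * (e$i * (e$j - e$i))) = e$i * (\<Sum>j\<in>UNIV. A$i$j * e$j) - (e$i * e$i) * (\<Sum>j\<in>UNIV. A$i$j)"
      by (simp add: sum_distrib_left sum_subtractf[symmetric] algebra_simps)
    then show "e$i * (\<Sum>j\<in>UNIV. A$i$j * e$j) = (\<Sum>j\<in>UNIV. A$i$j * (e$i * (e$j - e$i)))"
      using rs'[of i] by simp
  qed
  also have "\<dots> \<le> (\<Sum>i\<in>UNIV. \<Sum>j\<in>UNIV. 2 * m^2 * ((if j = i then A$i$j else 0) - A$i$j))"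
  proof (intro sum_mono)
    fix i j
    show "A$i$j * (e$i * (e$j - e$i)) \<le> 2 * m^2 * ((if j = i then A$i$j else 0) - A$i$j)"
    proof (cases "j = i")
      case True then show ?thesis by simp
    next
      case False
      have "\<bar>e$i * (e$j - e$i)\<bar> \<le> m * (2 * m)"
        unfolding abs_mult
        using em[of i] em[of j] by (intro mult_mono) auto
      then have "e$i * (e$j - e$i) \<ge> -(2 * m^2)" by (simp add: power2_eq_square abs_le_iff)
      then have "A$i$j * (e$i * (e$j - e$i)) \<le> A$i$j * (-(2 * m^2))"
        using off[of i j] False by (intro mult_left_mono_neg) auto
      then show ?thesis using False by (simp add: mult.commute)
    qed
  qed
  also have "\<dots> = (\<Sum>i\<in>UNIV. 2 * m^2 * A$i$i)"
  proof (rule sum.cong[OF refl])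
    fix i
    have "(\<Sum>j\<in>UNIV. 2 * m^2 * ((if j = i then A$i$j else 0) - A$i$j))
       = 2 * m^2 * ((\<Sum>j\<in>UNIV. (if j = i then A$i$j else 0)) - (\<Sum>j\<in>UNIV. A$i$j))"
      by (simp add: sum_distrib_left[symmetric] sum_subtractf)
    also have "\<dots> = 2 * m^2 * A$i$i" using rs'[of i] by (simp add: sum.delta')
    finally show "(\<Sum>j\<in>UNIV. 2 * m^2 * ((if j = i then A$i$j else 0) - A$i$j)) = 2 * m^2 * A$i$i" .
  qed
  also have "\<dots> = 2 * trace A * m^2"
    by (simp add: trace_def sum_distrib_left sum_distrib_right algebra_simps)
  finally show ?thesis unfolding m_def .
qed


lemma grad_ineq:
  assumes na: "noise_assumption M eps"
    and d: "(surplus M eps \<eta> has_derivative (\<lambda>h. D \<bullet> h)) (at y)"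
  shows "surplus M eps \<eta> y + D \<bullet> (z - y) \<le> surplus M eps \<eta> z"
proof -
  let ?F = "surplus M eps \<eta>"
  let ?k = "\<lambda>s. s * (?F z - ?F y) - (?F (y + s *\<^sub>R (z - y)) - ?F y)"
  have d1: "((\<lambda>s. ?F (y + s *\<^sub>R (z - y))) has_real_derivative (D \<bullet> (z - y))) (at 0)"
    by (rule line_deriv) (simp add: d)
  have "(?k has_real_derivative (1 * (?F z - ?F y) - (D \<bullet> (z - y) - 0))) (at 0)"
    by (auto intro!: derivative_eq_intros d1)
  moreover have "?k 0 \<le> ?k s" if "0 < s" "s < 1" for s
    using surplus_conv[OF na, of s \<eta> y "z - y"] that by (simp add: algebra_simps)
  ultimately have "1 * (?F z - ?F y) - (D \<bullet> (z - y) - 0) \<ge> 0"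
    by (intro right_deriv_nonneg[where \<delta>=1]) auto
  then show ?thesis by simp
qed

context
  fixes M :: "'a measure" and eps :: "'a \<Rightarrow> real^'n" and g :: "real^'n \<Rightarrow> real^'n"
    and H :: "real^'n \<Rightarrow> real^'n^'n" and L :: real
  assumes na: "noise_assumption M eps" and c2: "C2_with (surplus M eps 1) g H"
    and tr: "\<And>\<theta>. 2 * trace (H \<theta>) \<le> L"
begin

lemma smooth1:
  "surplus M eps 1 (w + e) \<le> surplus M eps 1 w + g w \<bullet> e + L / 2 * (infnorm e)^2"
proof -
  let ?f = "surplus M eps 1"
  define m where "m = infnorm e"
  define r where "r s = g (w + s *\<^sub>R e) \<bullet> e - g w \<bullet> e - L * s * m^2" for s
  define q where "q s = ?f (w + s *\<^sub>R e) - s * (g w \<bullet> e) - L / 2 * s^2 * m^2" for s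
  have rneg: "(H x *v e) \<bullet> e - L * m^2 \<le> 0" for x
  proof -
    have "e \<bullet> (H x *v e) \<le> 2 * trace (H x) * m^2"
      unfolding m_def using H_rowsum[OF na c2] H_offdiag[OF na c2] by (intro quad_bound) auto
    also have "\<dots> \<le> L * m^2" using tr[of x] by (intro mult_right_mono) auto
    finally show ?thesis by (simp add: inner_commute)
  qed
  have rd: "(r has_real_derivative ((H (w + s *\<^sub>R e) *v e) \<bullet> e - L * m^2)) (at s)" for s
  proof -
    have a: "((\<lambda>s. g (w + s *\<^sub>R e) \<bullet> e) has_real_derivative ((H (w + s *\<^sub>R e) *v e) \<bullet> e)) (at s)"
      by (rule line_deriv2[OF gder[OF na c2]])
    have "(r has_real_derivative ((H (w + s *\<^sub>R e) *v e) \<bullet> e - 0 - L * 1 * m^2)) (at s)"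
      unfolding r_def[abs_def]
      by (auto intro!: derivative_eq_intros a)
    then show ?thesis by simp
  qed
  have rle: "r s \<le> 0" if "0 \<le> s" for s
  proof -
    have "r s \<le> r 0"
      using that rd rneg by (intro DERIV_nonpos_imp_nonincreasing[of 0 s r]) blast+
    then show ?thesis by (simp add: r_def)
  qed
  have qd: "(q has_real_derivative r s) (at s)" for s
  proof -
    have a: "((\<lambda>s. ?f (w + s *\<^sub>R e)) has_real_derivative (g (w + s *\<^sub>R e) \<bullet> e)) (at s)"
      by (rule line_deriv[OF fder[OF na c2]])
    have "(q has_real_derivative (g (w + s *\<^sub>R e) \<bullet> e - 1 * (g w \<bullet> e) - L / 2 * (2 * s) * m^2)) (at s)"
      unfolding q_def[abs_def]
      by (auto intro!: derivative_eq_intros a)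
    then show ?thesis by (simp add: r_def)
  qed
  have "q 1 \<le> q 0"
    using rle qd by (intro DERIV_nonpos_imp_nonincreasing[of 0 1 q]) auto
  then show ?thesis by (simp add: q_def m_def)
qed

end


lemma smoothF:
  fixes M :: "'a measure" and eps :: "'a \<Rightarrow> real^'n"
  assumes na: "noise_assumption M eps" and c2: "C2_with (surplus M eps 1) g H"
    and tr: "\<And>\<theta>. 2 * trace (H \<theta>) \<le> L" and eta: "\<eta> > 0"
    and d: "(surplus M eps \<eta> has_derivative (\<lambda>h. D \<bullet> h)) (at y)"
  shows "surplus M eps \<eta> (y + e) \<le> surplus M eps \<eta> y + D \<bullet> e + L / (2 * \<eta>) * (infnorm e)^2"
proof -
  let ?f = "surplus M eps 1" and ?w = "(1/\<eta>) *\<^sub>R y"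
  have Feq: "surplus M eps \<eta> = (\<lambda>\<theta>. \<eta> * ?f ((1/\<eta>) *\<^sub>R \<theta>))"
    by (rule ext) (rule surplus_scale[OF eta])
  have "((\<lambda>\<theta>. (1/\<eta>) *\<^sub>R \<theta>) has_derivative (\<lambda>h. (1/\<eta>) *\<^sub>R h)) (at y)"
    by (auto intro!: derivative_eq_intros)
  from diff_chain_at[OF this fder[OF na c2, of ?w]]
  have "((?f \<circ> (\<lambda>\<theta>. (1/\<eta>) *\<^sub>R \<theta>)) has_derivative ((\<lambda>h. g ?w \<bullet> h) \<circ> (\<lambda>h. (1/\<eta>) *\<^sub>R h))) (at y)" .
  then have "((\<lambda>\<theta>. ?f ((1/\<eta>) *\<^sub>R \<theta>)) has_derivative (\<lambda>h. g ?w \<bullet> ((1/\<eta>) *\<^sub>R h))) (at y)"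
    unfolding o_def .
  then have "((\<lambda>\<theta>. \<eta> * ?f ((1/\<eta>) *\<^sub>R \<theta>)) has_derivative (\<lambda>h. \<eta> * (g ?w \<bullet> ((1/\<eta>) *\<^sub>R h)))) (at y)"
    by (rule has_derivative_mult_right)
  then have d2: "(surplus M eps \<eta> has_derivative (\<lambda>h. \<eta> * (g ?w \<bullet> ((1/\<eta>) *\<^sub>R h)))) (at y)"
    unfolding Feq .
  from has_derivative_unique[OF d d2]
  have "D \<bullet> e = \<eta> * (g ?w \<bullet> ((1/\<eta>) *\<^sub>R e))" by metis
  then have De: "D \<bullet> e = g ?w \<bullet> e" using eta by simp
  have "surplus M eps \<eta> (y + e) = \<eta> * ?f (?w + (1/\<eta>) *\<^sub>R e)"
    unfolding surplus_scale[OF eta, of M eps "y + e"] by (simp add: scaleR_add_right)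
  also have "\<dots> \<le> \<eta> * (?f ?w + g ?w \<bullet> ((1/\<eta>) *\<^sub>R e) + L / 2 * (infnorm ((1/\<eta>) *\<^sub>R e))^2)"
    using smooth1[OF na c2 tr, of ?w "(1/\<eta>) *\<^sub>R e"] eta by (intro mult_left_mono) auto
  also have "\<dots> = surplus M eps \<eta> y + D \<bullet> e + L / (2 * \<eta>) * (infnorm e)^2"
    using eta surplus_scale[OF eta, of M eps y] De
    by (simp add: infnorm_mul power_mult_distrib power2_eq_square field_simps)
  finally show ?thesis .
qed


theorem mainTheorem12:
  fixes M :: "'a measure" and eps :: "'a \<Rightarrow> real^'n"
    and \<eta> L :: real and T :: nat
    and u \<beta> x :: "nat \<Rightarrow> real^'n" and xstar :: "real^'n"
  assumes "CARD('n) \<ge> 2"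
    and "noise_assumption M eps"
    and "hessian_trace_bound M eps L"
    and "\<eta> > 0"
    and "\<And>t. t \<in> {1..T} \<Longrightarrow>
           (surplus M eps \<eta> has_derivative (\<lambda>h. x t \<bullet> h))
             (at ((\<Sum>s\<in>{1..t-1}. u s) + \<beta> t))"
    and "xstar \<in> prob_simplex"
  shows "(\<Sum>t\<in>{1..T}. (xstar - x t) \<bullet> u t)
           \<le> \<eta> * surplus M eps 1 0 + L / (2 * \<eta>) * (\<Sum>t\<in>{1..T}. (infnorm (u t - \<beta> t))\<^sup>2)"
proof -
  note na = assms(2) and eta = assms(4)
  let ?F = "surplus M eps \<eta>"
  define \<Theta> where "\<Theta> n = (\<Sum>s\<in>{1..n}. u s)" for n
  define c where "c t = L / (2 * \<eta>) * (infnorm (u t - \<beta> t))\<^sup>2" for t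
  from assms(3) obtain g H where c2: "C2_with (surplus M eps 1) g H" and tr: "\<And>\<theta>. 2 * trace (H \<theta>) \<le> L"
    unfolding hessian_trace_bound_def by blast
  have step: "?F (\<Theta> (Suc n)) - ?F (\<Theta> n) - x (Suc n) \<bullet> u (Suc n) \<le> c (Suc n)" if "Suc n \<le> T" for n
  proof -
    let ?y = "\<Theta> n + \<beta> (Suc n)"
    have d: "(?F has_derivative (\<lambda>h. x (Suc n) \<bullet> h)) (at ?y)"
      using assms(5)[of "Suc n"] that by (simp add: \<Theta>_def)
    have g1: "?F ?y + x (Suc n) \<bullet> (\<Theta> n - ?y) \<le> ?F (\<Theta> n)"
      by (rule grad_ineq[OF na d])
    have s1: "?F (?y + (u (Suc n) - \<beta> (Suc n))) \<le> ?F ?y + x (Suc n) \<bullet> (u (Suc n) - \<beta> (Suc n)) + c (Suc n)"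
      unfolding c_def by (rule smoothF[OF na c2 tr eta d])
    have e1: "?y + (u (Suc n) - \<beta> (Suc n)) = \<Theta> (Suc n)" by (simp add: \<Theta>_def)
    have e2: "\<Theta> n - ?y = - \<beta> (Suc n)" by simp
    show ?thesis using g1 s1 unfolding e1 e2 by (simp add: inner_diff_right)
  qed
  have tele: "?F (\<Theta> n) - ?F 0 - (\<Sum>t\<in>{1..n}. x t \<bullet> u t) \<le> (\<Sum>t\<in>{1..n}. c t)" if "n \<le> T" for n
    using that
  proof (induction n)
    case 0
    then show ?case by (simp add: \<Theta>_def)
  next
    case (Suc n)
    then show ?case using step[of n] by simp
  qed
  have low: "xstar \<bullet> \<Theta> T \<le> ?F (\<Theta> T)" by (rule surplus_lower[OF na assms(6)])
  have lhs: "(\<Sum>t\<in>{1..T}. (xstar - x t) \<bullet> u t) = xstar \<bullet> \<Theta> T - (\<Sum>t\<in>{1..T}. x t \<bullet> u t)"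
    by (simp add: \<Theta>_def inner_diff_left sum_subtractf inner_sum_right)
  have F0: "?F 0 = \<eta> * surplus M eps 1 0" using surplus_scale[OF eta, of M eps 0] by simp
  have rhs: "L / (2 * \<eta>) * (\<Sum>t\<in>{1..T}. (infnorm (u t - \<beta> t))\<^sup>2) = (\<Sum>t\<in>{1..T}. c t)"
    by (simp add: c_def sum_distrib_left)
  show ?thesis unfolding lhs rhs using tele[of T] low F0 by simp
qed

end
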